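(* The certifier's revenue-maximization problem in the certification market is equivalent to an instance of the non-linear pricing problem with buyer types $\psi$ distributed according to $G$ and valuation $v(q;\psi)=f(q;\phi(\psi))-g(q;\psi)$, where $\phi(\psi)$ satisfies $F(\phi(\psi))=G(\psi)$. Specifically: $v$ is concave in $q$, satisfies $v(0;\psi)=0$, and satisfies the strict single-crossing condition; and for every menu $M=\{(q_i,t_i)\}$, the certificate chosen by each producer type $\psi$ in equilibrium coincides with the quantity chosen by buyer type $\psi$ facing the menu $M$ (interpreting thresholds as quantities and transfers as prices), so the certifier's revenue (net of verification cost $c$ per non-trivial certificate) from $M$ equals the seller's revenue from $M$ in the pricing problem.
   Context: Certification market: producers with types $\psi$ (atomless distribution $G$, compact support), consumers with types $\phi$ (atomless distribution $F$, compact support), quality $q\in[0,1]$; cost $g(q;\psi)$ weakly convex non-decreasing in $q$, $g(0;\psi)=0$; value $f(q;\phi)$ weakly concave non-decreasing in $q$, $f(0;\phi)=0$, $0\le f\le 1$; strict single-crossing: for $\phi_1<\phi_2$, $q_1<q_2$: $f(q_2;\phi_2)-f(q_1;\phi_2)>f(q_2;\phi_1)-f(q_1;\phi_1)$, and for $\psi_1<\psi_2$, $q_1<q_2$: $g(q_2;\psi_2)-g(q_1;\psi_2)<g(q_2;\psi_1)-g(q_1;\psi_1)$. The certifier offers a menu $M=\{(q_i,t_i)\}$ of threshold certificates $[q_i,1]$ with transfers $t_i$ (always including $(0,0)$), incurs verification cost $c\ge0$ for each non-trivial certificate ($q_i>0$) issued, and each producer choosing threshold $q_i$ produces at quality $q_i$;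 producers choose certificates in equilibrium and then trade with consumers in a competitive (Walrasian) market equilibrium. Certifier revenue = expected transfers minus $c$ times the measure of producers buying non-trivial certificates. Non-linear pricing problem: a seller faces a buyer of type $\theta$ drawn from a known prior; the buyer's value for quantity $q\in[0,1]$ is $v(q;\theta)$, concave (not necessarily monotone) in $q$ with $v(0;\theta)=0$, satisfying strict single-crossing: for $\theta_1<\theta_2$, $q_1<q_2$, $v(q_2;\theta_2)-v(q_1;\theta_2)>v(q_2;\theta_1)-v(q_1;\theta_1)$. The seller commits to a menu $M$ of (quantity, price) pairs including $(0,0)$; the buyer selects a pair maximizing $v(q;\theta)-p$; the seller pays a constant cost $c$ for any non-zero quantity sold. $\operatorname{Rev}(M)$ denotes the expected price collected minus $c$ times the probability of selling a non-zero quantity. *)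

theory Defs
  imports "HOL-Probability.Probability"
begin

definition type_distribution :: "real measure \<Rightarrow> bool" where
  "type_distribution D \<longleftrightarrow> prob_space D \<and> sets D = sets borel
     \<and> (\<forall>x. measure D {x} = 0) \<and> (\<exists>K. compact K \<and> measure D K = 1)"

text \<open>A menu: finite set of (threshold/quantity, transfer/price) pairs, thresholds in [0,1],
always containing the trivial option (0,0).\<close>

definition menu :: "(real \<times> real) set \<Rightarrow> bool" where
  "menu M \<longleftrightarrow> finite M \<and> (0, 0) \<in> M \<and> (\<forall>m\<in>M. 0 \<le> fst m \<and> fst m \<le> 1)"

definition strict_single_crossing :: "(real \<Rightarrow> real \<Rightarrow> real) \<Rightarrow> bool" where
  "strict_single_crossing w \<longleftrightarrow>
     (\<forall>\<theta>1 \<theta>2 q1 q2. \<theta>1 < \<theta>2 \<longrightarrow> 0 \<le> q1 \<longrightarrow> q1 < q2 \<longrightarrow> q2 \<le> 1 \<longrightarrow>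
        w q2 \<theta>2 - w q1 \<theta>2 > w q2 \<theta>1 - w q1 \<theta>1)"

definition buyer_best :: "(real \<Rightarrow> real \<Rightarrow> real) \<Rightarrow> (real \<times> real) set \<Rightarrow> real \<Rightarrow> real \<times> real \<Rightarrow> bool" where
  "buyer_best v M \<theta> m \<longleftrightarrow> m \<in> M \<and> (\<forall>m'\<in>M. v (fst m') \<theta> - snd m' \<le> v (fst m) \<theta> - snd m)"

definition seller_revenue :: "real measure \<Rightarrow> real \<Rightarrow> (real \<Rightarrow> real \<times> real) \<Rightarrow> real" where
  "seller_revenue D c s = (\<integral>\<theta>. snd (s \<theta>) \<partial>D) - c * measure D {\<theta>. fst (s \<theta>) \<noteq> 0}"

definition consumer_util :: "(real \<Rightarrow> real \<Rightarrow> real) \<Rightarrow> (real \<Rightarrow> real) \<Rightarrow> real \<Rightarrow> real option \<Rightarrow> real" where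
  "consumer_util f p \<phi> b = (case b of None \<Rightarrow> 0 | Some q \<Rightarrow> f q \<phi> - p q)"

text \<open>Equilibrium of the certification market under menu M:
  \<sigma> \<psi>  = certificate chosen by producer type \<psi> (producer then produces at quality fst (\<sigma> \<psi>));
  \<beta> \<phi>  = purchase of consumer type \<phi>;
  p q  = competitive (Walrasian) price of goods of quality q.\<close>

definition cert_equilibrium ::
  "real measure \<Rightarrow> real measure \<Rightarrow> (real \<Rightarrow> real \<Rightarrow> real) \<Rightarrow> (real \<Rightarrow> real \<Rightarrow> real)
   \<Rightarrow> (real \<times> real) set \<Rightarrow> (real \<Rightarrow> real \<times> real) \<Rightarrow> (real \<Rightarrow> real option) \<Rightarrow> (real \<Rightarrow> real) \<Rightarrow> bool" where
  "cert_equilibrium F G f g M \<sigma> \<beta> p \<longleftrightarrow>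
     (\<forall>\<psi>. \<sigma> \<psi> \<in> M)
   \<and> (\<forall>\<psi>. \<forall>m\<in>M. p (fst m) - g (fst m) \<psi> - snd m \<le> p (fst (\<sigma> \<psi>)) - g (fst (\<sigma> \<psi>)) \<psi> - snd (\<sigma> \<psi>))
   \<and> (\<forall>\<phi>. \<beta> \<phi> \<in> insert None (Some ` fst ` M))
   \<and> (\<forall>\<phi>. 0 \<le> consumer_util f p \<phi> (\<beta> \<phi>)
           \<and> (\<forall>m\<in>M. f (fst m) \<phi> - p (fst m) \<le> consumer_util f p \<phi> (\<beta> \<phi>)))
   \<and> p 0 = 0
   \<and> (\<forall>m\<in>M. {\<psi>. \<sigma> \<psi> = m} \<in> sets G)
   \<and> (\<forall>q. {\<phi>. \<beta> \<phi> = Some q} \<in> sets F)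
   \<and> (\<forall>q\<in>fst ` M. 0 < q \<longrightarrow> measure F {\<phi>. \<beta> \<phi> = Some q} = measure G {\<psi>. fst (\<sigma> \<psi>) = q})"

definition certifier_revenue :: "real measure \<Rightarrow> real \<Rightarrow> (real \<Rightarrow> real \<times> real) \<Rightarrow> real" where
  "certifier_revenue G c \<sigma> = (\<integral>\<psi>. snd (\<sigma> \<psi>) \<partial>G) - c * measure G {\<psi>. 0 < fst (\<sigma> \<psi>)}"

end

theory Submission
  imports Defs
begin

lemma lim_le_aux:
  fixes G :: "real measure"
  assumes P: "prob_space G" and S: "sets G = sets borel"
    and inc: "incseq A" and As: "\<And>n. A n \<in> sets G"
    and bnd: "\<And>n. measure G (A n) \<le> u" and DU: "D = (\<Union>n. A n)"
  shows "measure G D \<le> u"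
proof -
  interpret prob_space G by (rule P)
  have "(\<lambda>n. measure G (A n)) \<longlonglongrightarrow> measure G (\<Union>n. A n)"
    by (rule finite_Lim_measure_incseq) (use As inc in auto)
  then show ?thesis unfolding DU
    by (rule LIMSEQ_le_const2) (use bnd in auto)
qed

lemma down_le:
  fixes G :: "real measure"
  assumes P: "prob_space G" and S: "sets G = sets borel"
    and D: "\<And>x y. x \<in> D \<Longrightarrow> y \<le> x \<Longrightarrow> y \<in> D"
    and bnd: "\<And>x. x \<in> D \<Longrightarrow> measure G {..x} \<le> u" and u: "0 \<le> u"
  shows "measure G D \<le> u"
proof -
  interpret prob_space G by (rule P)
  have Ss: "\<And>x. {..x} \<in> sets G" using S by simp
  show ?thesis
  proof (cases "D = {}")
    case True then show ?thesis using u by simp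
  next
    case ne: False
    show ?thesis
    proof (cases "bdd_above D")
      case False
      have a: "real n \<in> D" for n
      proof -
        have "\<not> (\<forall>x\<in>D. x \<le> real n)" using False by (meson bdd_above.I)
        then obtain x where "x \<in> D" "\<not> x \<le> real n" by blast
        then show ?thesis using D[of x "real n"] by simp
      qed
      have DU: "D = (\<Union>n. {..real n})"
      proof (safe)
        fix x assume "x \<in> D"
        obtain n where "x \<le> real n" using real_arch_simple by blast
        then show "x \<in> (\<Union>n. {..real n})" by auto
      next
        fix x n assume "x \<le> real n" then show "x \<in> D" using a[of n] D[of "real n" x] by blast
      qed
      show ?thesis
        by (rule lim_le_aux[OF P S _ _ _ DU]) (auto simp: incseq_def Ss bnd a)
    next
      case bdd: True
      show ?thesis
      proof (cases "Sup D \<in> D")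
        case True
        have DS: "D = {..Sup D}" using True D bdd by (auto intro: cSup_upper)
        show ?thesis by (subst DS) (rule bnd[OF True])
      next
        case False
        define a where "a n = Sup D - 1 / (real n + 1)" for n
        have a: "a n \<in> D" for n
        proof -
          have "a n < Sup D" unfolding a_def by simp
          then obtain x where "x \<in> D" "a n < x" using less_cSup_iff[OF ne bdd] by blast
          then show ?thesis using D[of x "a n"] by simp
        qed
        have inc: "incseq a" unfolding incseq_def a_def
          by (auto intro!: frac_le)
        have DU: "D = (\<Union>n. {..a n})"
        proof (safe)
          fix x assume x: "x \<in> D"
          have "x \<le> Sup D" using x bdd by (rule cSup_upper)
          with x False have "x < Sup D" by (cases "x = Sup D") auto
          then obtain n where n: "inverse (real (Suc n)) < Sup D - x"
            using reals_Archimedean[of "Sup D - x"] by auto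
          have "x \<le> a n" using n unfolding a_def by (simp add: inverse_eq_divide add.commute)
          then show "x \<in> (\<Union>n. {..a n})" by auto
        next
          fix x n assume "x \<le> a n" then show "x \<in> D" using a[of n] D[of "a n" x] by blast
        qed
        show ?thesis
          by (rule lim_le_aux[OF P S _ _ _ DU])
             (use inc in \<open>auto simp: incseq_def Ss bnd a\<close>)
      qed
    qed
  qed
qed

lemma up_le:
  fixes G :: "real measure"
  assumes P: "prob_space G" and S: "sets G = sets borel"
    and D: "\<And>x y. x \<in> D \<Longrightarrow> x \<le> y \<Longrightarrow> y \<in> D"
    and bnd: "\<And>x. x \<in> D \<Longrightarrow> measure G {x..} \<le> u" and u: "0 \<le> u"
  shows "measure G D \<le> u"
proof -
  interpret prob_space G by (rule P)
  have Ss: "\<And>x. {x..} \<in> sets G" using S by simp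
  show ?thesis
  proof (cases "D = {}")
    case True then show ?thesis using u by simp
  next
    case ne: False
    show ?thesis
    proof (cases "bdd_below D")
      case False
      have a: "- real n \<in> D" for n
      proof -
        have "\<not> (\<forall>x\<in>D. - real n \<le> x)" using False by (meson bdd_below.I)
        then obtain x where "x \<in> D" "\<not> - real n \<le> x" by blast
        then show ?thesis using D[of x "- real n"] by simp
      qed
      have DU: "D = (\<Union>n. {- real n..})"
      proof (safe)
        fix x assume "x \<in> D"
        obtain n where "- x \<le> real n" using real_arch_simple by blast
        then have "- real n \<le> x" by simp
        then show "x \<in> (\<Union>n. {- real n..})" by blast
      next
        fix x n assume "- real n \<le> x" then show "x \<in> D" using a[of n] D[of "- real n" x] by blast
      qed
      show ?thesis
        by (rule lim_le_aux[OF P S _ _ _ DU]) (auto simp: incseq_def Ss bnd a)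
    next
      case bdd: True
      show ?thesis
      proof (cases "Inf D \<in> D")
        case True
        have DS: "D = {Inf D..}" using True D bdd by (auto intro: cInf_lower)
        show ?thesis by (subst DS) (rule bnd[OF True])
      next
        case False
        define a where "a n = Inf D + 1 / (real n + 1)" for n
        have a: "a n \<in> D" for n
        proof -
          have "Inf D < a n" unfolding a_def by simp
          then obtain x where "x \<in> D" "x < a n" using cInf_less_iff[OF ne bdd] by blast
          then show ?thesis using D[of x "a n"] by simp
        qed
        have inc: "incseq (\<lambda>n. {a n..})" unfolding incseq_def a_def
          by (auto intro!: frac_le)
        have DU: "D = (\<Union>n. {a n..})"
        proof (safe)
          fix x assume x: "x \<in> D"
          have "Inf D \<le> x" using x bdd by (rule cInf_lower)
          with x False have "Inf D < x" by (cases "x = Inf D") auto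
          then obtain n where n: "inverse (real (Suc n)) < x - Inf D"
            using reals_Archimedean[of "x - Inf D"] by auto
          have "a n \<le> x" using n unfolding a_def by (simp add: inverse_eq_divide add.commute)
          then show "x \<in> (\<Union>n. {a n..})" by auto
        next
          fix x n assume "a n \<le> x" then show "x \<in> D" using a[of n] D[of "a n" x] by blast
        qed
        show ?thesis
          by (rule lim_le_aux[OF P S _ _ _ DU])
             (use inc in \<open>auto simp: Ss bnd a\<close>)
      qed
    qed
  qed
qed


lemma up_borel:
  fixes U :: "real set"
  assumes "\<And>x y. x \<in> U \<Longrightarrow> x \<le> y \<Longrightarrow> y \<in> U"
  shows "U \<in> sets borel"
  by (rule real_interval_borel_measurable) (use assms in \<open>auto simp: is_interval_1\<close>)

lemma down_borel:
  fixes U :: "real set"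
  assumes "\<And>x y. x \<in> U \<Longrightarrow> y \<le> x \<Longrightarrow> y \<in> U"
  shows "U \<in> sets borel"
  by (rule real_interval_borel_measurable) (use assms in \<open>auto simp: is_interval_1\<close>)

lemma td_facts:
  assumes "type_distribution G"
  shows "prob_space G" "sets G = sets borel" "space G = UNIV" "\<And>x. measure G {x} = 0"
  using assms unfolding type_distribution_def
  by (auto dest: sets_eq_imp_space_eq)

lemma td_ge:
  assumes G: "type_distribution G"
  shows "measure G {x..} = 1 - measure G {..x}"
proof -
  interpret prob_space G using td_facts[OF G] by simp
  have S: "sets G = sets borel" "space G = UNIV" "measure G {x} = 0" using td_facts[OF G] by auto
  have "{x..} = space G - {..<x}" using S by auto
  then have "measure G {x..} = 1 - measure G {..<x}" using S prob_compl[of "{..<x}"] by simp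
  moreover have "measure G {..x} = measure G {..<x} + measure G {x}"
  proof -
    have e: "{..x} = {..<x} \<union> {x}" by auto
    have "measure G ({..<x} \<union> {x}) = measure G {..<x} + measure G {x}"
      by (rule finite_measure_Union) (use S in auto)
    then show ?thesis using arg_cong[OF e, of "measure G"] by linarith
  qed
  ultimately show ?thesis using S by simp
qed

lemma match_AE:
  fixes F G :: "real measure" and \<phi> :: "real \<Rightarrow> real"
  assumes F: "type_distribution F" and G: "type_distribution G"
    and q: "\<And>\<psi>. cdf F (\<phi> \<psi>) = cdf G \<psi>"
    and U: "\<And>x y. x \<in> U \<Longrightarrow> x \<le> y \<Longrightarrow> y \<in> U"
    and V: "\<And>x y. x \<in> V \<Longrightarrow> x \<le> y \<Longrightarrow> y \<in> V"
    and UV: "measure G U = measure F V"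
  shows "AE \<psi> in G. (\<psi> \<in> U \<longleftrightarrow> \<phi> \<psi> \<in> V)"
proof -
  interpret F: prob_space F using td_facts[OF F] by simp
  interpret G: prob_space G using td_facts[OF G] by simp
  have SF: "sets F = sets borel" "space F = UNIV" using td_facts[OF F] by auto
  have SG: "sets G = sets borel" "space G = UNIV" using td_facts[OF G] by auto
  have q': "measure F {..\<phi> \<psi>} = measure G {..\<psi>}" for \<psi> using q[of \<psi>] by (simp add: cdf_def)
  have Us: "U \<in> sets G" "V \<in> sets F" using up_borel[OF U] up_borel[OF V] SF SG by auto
  define u where "u = measure G (UNIV - U)"
  have u1: "u = 1 - measure G U" unfolding u_def using G.prob_compl[OF Us(1)] SG by simp
  have v1: "measure F (UNIV - V) = 1 - measure F V" using F.prob_compl[OF Us(2)] SF by simp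
  define D where "D = {x. measure G {..x} \<le> u}"
  have Dd: "y \<in> D" if "x \<in> D" "y \<le> x" for x y
  proof -
    have "measure G {..y} \<le> measure G {..x}" using that SG by (intro G.finite_measure_mono) auto
    then show ?thesis using that unfolding D_def by auto
  qed
  have Ds: "D \<in> sets G" using down_borel[OF Dd] SG by auto
  have UD: "UNIV - U \<subseteq> D"
  proof
    fix x assume x: "x \<in> UNIV - U"
    have "{..x} \<subseteq> UNIV - U" using x U by auto
    then have "measure G {..x} \<le> u" unfolding u_def using Us SG by (intro G.finite_measure_mono) auto
    then show "x \<in> D" unfolding D_def by simp
  qed
  have "measure G D \<le> u"
    by (rule down_le[OF td_facts(1,2)[OF G] Dd]) (auto simp: D_def u_def)
  moreover have "measure G D = measure G (UNIV - U) + measure G (U \<inter> D)"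
  proof -
    have e: "D = (UNIV - U) \<union> (U \<inter> D)" using UD by auto
    have "measure G ((UNIV - U) \<union> (U \<inter> D)) = measure G (UNIV - U) + measure G (U \<inter> D)"
      by (rule G.finite_measure_Union) (use Us Ds SG in auto)
    then show ?thesis using arg_cong[OF e, of "measure G"] by linarith
  qed
  ultimately have "measure G (U \<inter> D) \<le> 0" unfolding u_def by simp
  then have N1: "U \<inter> D \<in> null_sets G"
    using Us Ds G.emeasure_eq_measure[of "U \<inter> D"] measure_nonneg[of G "U \<inter> D"]
    by (intro null_setsI) auto
  define w where "w = measure G U"
  define E where "E = {x. measure G {x..} \<le> w}"
  have Eu: "y \<in> E" if "x \<in> E" "x \<le> y" for x y
  proof -
    have "measure G {y..} \<le> measure G {x..}" using that SG by (intro G.finite_measure_mono) auto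
    then show ?thesis using that unfolding E_def by auto
  qed
  have Es: "E \<in> sets G" using up_borel[OF Eu] SG by auto
  have UE: "U \<subseteq> E"
  proof
    fix x assume x: "x \<in> U"
    have "{x..} \<subseteq> U" using x U by auto
    then have "measure G {x..} \<le> w" unfolding w_def using Us SG by (intro G.finite_measure_mono) auto
    then show "x \<in> E" unfolding E_def by simp
  qed
  have "measure G E \<le> w"
    by (rule up_le[OF td_facts(1,2)[OF G] Eu]) (auto simp: E_def w_def)
  moreover have "measure G E = measure G U + measure G ((UNIV - U) \<inter> E)"
  proof -
    have e: "E = U \<union> ((UNIV - U) \<inter> E)" using UE by auto
    have "measure G (U \<union> ((UNIV - U) \<inter> E)) = measure G U + measure G ((UNIV - U) \<inter> E)"
      by (rule G.finite_measure_Union) (use Us Es SG in auto)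
    then show ?thesis using arg_cong[OF e, of "measure G"] by linarith
  qed
  ultimately have "measure G ((UNIV - U) \<inter> E) \<le> 0" unfolding w_def by simp
  then have N2: "(UNIV - U) \<inter> E \<in> null_sets G"
    using Us Es SG G.emeasure_eq_measure[of "(UNIV - U) \<inter> E"] measure_nonneg[of G "(UNIV - U) \<inter> E"]
    by (intro null_setsI) auto
  show ?thesis
  proof (rule AE_I'[OF null_sets.Un[OF N1 N2]])
    show "{x \<in> space G. \<not> (x \<in> U \<longleftrightarrow> \<phi> x \<in> V)} \<subseteq> U \<inter> D \<union> (UNIV - U) \<inter> E"
    proof (rule subsetI)
      fix x assume "x \<in> {x \<in> space G. \<not> (x \<in> U \<longleftrightarrow> \<phi> x \<in> V)}"
      then consider "x \<in> U" "\<phi> x \<notin> V" | "x \<notin> U" "\<phi> x \<in> V" by blast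
      then show "x \<in> U \<inter> D \<union> (UNIV - U) \<inter> E"
      proof cases
        case 1
        have "{..\<phi> x} \<subseteq> UNIV - V" using 1 V by auto
        then have "measure F {..\<phi> x} \<le> measure F (UNIV - V)" using Us SF by (intro F.finite_measure_mono) auto
        then have "measure G {..x} \<le> u" using q' v1 u1 UV by simp
        then show ?thesis using 1 unfolding D_def by simp
      next
        case 2
        have "{\<phi> x..} \<subseteq> V" using 2 V by auto
        then have "measure F {\<phi> x..} \<le> measure F V" using Us SF by (intro F.finite_measure_mono) auto
        then have "measure G {x..} \<le> w" using q'[of x] td_ge[OF F, of "\<phi> x"] td_ge[OF G, of x] UV w_def by simp
        then show ?thesis using 2 unfolding E_def by simp
      qed
    qed
  qed
qed


lemma fin_pre:
  assumes "finite M" "\<And>\<psi>. h \<psi> \<in> M" "\<And>m. m \<in> M \<Longrightarrow> {\<psi>. h \<psi> = m} \<in> sets G"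
    and sp: "space G = UNIV"
  shows "{\<psi>. P (h \<psi>)} \<in> sets G"
proof -
  have "{\<psi>. P (h \<psi>)} = (\<Union>m\<in>{m\<in>M. P m}. {\<psi>. h \<psi> = m})" using assms(2) by auto
  also have "\<dots> \<in> sets G" using assms(1,3) by (intro sets.finite_UN) auto
  finally show ?thesis .
qed

lemma fin_meas:
  fixes k :: "'b \<Rightarrow> real"
  assumes "finite M" "\<And>\<psi>. h \<psi> \<in> M" "\<And>m. m \<in> M \<Longrightarrow> {\<psi>. h \<psi> = m} \<in> sets G"
    and sp: "space G = UNIV"
  shows "(\<lambda>\<psi>. k (h \<psi>)) \<in> borel_measurable G"
proof -
  have e: "(\<lambda>\<psi>. k (h \<psi>)) = (\<lambda>\<psi>. \<Sum>m\<in>M. k m * indicator {\<psi>. h \<psi> = m} \<psi>)"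
  proof
    fix \<psi>
    have "(\<Sum>m\<in>M. k m * indicator {\<psi>. h \<psi> = m} \<psi>) = (\<Sum>m\<in>M. if m = h \<psi> then k m else 0)"
      by (intro sum.cong) (auto simp: indicator_def)
    also have "\<dots> = k (h \<psi>)" using assms(1,2) by (simp add: sum.delta')
    finally show "k (h \<psi>) = (\<Sum>m\<in>M. k m * indicator {\<psi>. h \<psi> = m} \<psi>)" by simp
  qed
  show ?thesis unfolding e
    by (intro borel_measurable_sum borel_measurable_times borel_measurable_const borel_measurable_indicator assms(3))
qed

lemma pair_between:
  assumes sc: "strict_single_crossing v" and q: "q \<in> {0..1}" "q' \<in> {0..1}"
    and x: "a \<le> x" "x \<le> b"
    and ha: "v q' a - t' \<le> v q a - t" and hb: "v q' b - t' \<le> v q b - t"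
  shows "v q' x - t' \<le> v q x - t"
proof (cases q' q rule: linorder_cases)
  case less
  show ?thesis
  proof (cases "a = x")
    case False
    then have "a < x" using x by simp
    then have "v q x - v q' x > v q a - v q' a" using sc less q unfolding strict_single_crossing_def by auto
    then show ?thesis using ha by linarith
  qed (use ha in simp)
next
  case greater
  show ?thesis
  proof (cases "x = b")
    case False
    then have "x < b" using x by simp
    then have "v q' b - v q b > v q' x - v q x" using sc greater q unfolding strict_single_crossing_def by auto
    then show ?thesis using hb by linarith
  qed (use hb in simp)
qed (use ha in simp)

lemma best_interval:
  assumes sc: "strict_single_crossing v" and M: "menu M" and m: "m \<in> M"
  shows "{\<psi>. buyer_best v M \<psi> m} \<in> sets borel"
proof (rule real_interval_borel_measurable, unfold is_interval_1, intro ballI allI impI)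
  fix a b x assume a: "a \<in> {\<psi>. buyer_best v M \<psi> m}" and b: "b \<in> {\<psi>. buyer_best v M \<psi> m}"
    and x: "a \<le> x \<and> x \<le> b"
  have q: "fst m' \<in> {0..1}" if "m' \<in> M" for m' using M that unfolding menu_def by auto
  show "x \<in> {\<psi>. buyer_best v M \<psi> m}"
    unfolding buyer_best_def
  proof (intro CollectI conjI ballI m)
    fix m' assume m': "m' \<in> M"
    show "v (fst m') x - snd m' \<le> v (fst m) x - snd m"
      by (rule pair_between[OF sc q[OF m] q[OF m'], of a x b])
         (use a b x m' in \<open>auto simp: buyer_best_def\<close>)
  qed
qed


lemma eq_AE:
  fixes F G :: "real measure" and f g :: "real \<Rightarrow> real \<Rightarrow> real" and \<phi> :: "real \<Rightarrow> real"
  assumes F: "type_distribution F" and G: "type_distribution G"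
    and f_zero: "\<And>\<phi>'. f 0 \<phi>' = 0"
    and f_sc: "strict_single_crossing f"
    and g_sc: "strict_single_crossing (\<lambda>q \<psi>. - g q \<psi>)"
    and qt: "\<And>\<psi>. cdf F (\<phi> \<psi>) = cdf G \<psi>"
    and M: "menu M" and eq: "cert_equilibrium F G f g M \<sigma> \<beta> p"
  shows "AE \<psi> in G. buyer_best (\<lambda>q \<psi>. f q (\<phi> \<psi>) - g q \<psi>) M \<psi> (\<sigma> \<psi>)"
proof -
  interpret F: prob_space F using td_facts[OF F] by simp
  interpret G: prob_space G using td_facts[OF G] by simp
  have SF: "sets F = sets borel" "space F = UNIV" using td_facts[OF F] by auto
  have SG: "sets G = sets borel" "space G = UNIV" using td_facts[OF G] by auto
  note E = eq[unfolded cert_equilibrium_def]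
  have E1: "\<And>\<psi>. \<sigma> \<psi> \<in> M" using E by blast
  have E2: "\<And>\<psi> m. m \<in> M \<Longrightarrow> p (fst m) - g (fst m) \<psi> - snd m \<le> p (fst (\<sigma> \<psi>)) - g (fst (\<sigma> \<psi>)) \<psi> - snd (\<sigma> \<psi>)"
    using E by blast
  have E3: "\<And>x. \<beta> x \<in> insert None (Some ` fst ` M)" using E by blast
  have E4: "\<And>x m. m \<in> M \<Longrightarrow> f (fst m) x - p (fst m) \<le> consumer_util f p x (\<beta> x)" using E by blast
  have E5: "p 0 = 0" using E by blast
  have E6: "\<And>m. m \<in> M \<Longrightarrow> {\<psi>. \<sigma> \<psi> = m} \<in> sets G" using E by blast
  have E7: "\<And>y. {x. \<beta> x = Some y} \<in> sets F" using E by blast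
  have E8: "\<And>y. y \<in> fst ` M \<Longrightarrow> 0 < y \<Longrightarrow> measure F {x. \<beta> x = Some y} = measure G {\<psi>. fst (\<sigma> \<psi>) = y}"
    using E by blast
  define Q where "Q = fst ` M"
  have finM: "finite M" and M0: "(0,0) \<in> M" and M01: "\<And>m. m \<in> M \<Longrightarrow> 0 \<le> fst m \<and> fst m \<le> 1"
    using M unfolding menu_def by auto
  have finQ: "finite Q" unfolding Q_def using finM by simp
  have Q0: "0 \<in> Q" unfolding Q_def using M0 by force
  have Q01: "\<And>x. x \<in> Q \<Longrightarrow> 0 \<le> x \<and> x \<le> 1" unfolding Q_def using M01 by auto
  define qs where "qs \<psi> = fst (\<sigma> \<psi>)" for \<psi>
  define Qc where "Qc x = (case \<beta> x of None \<Rightarrow> 0 | Some q \<Rightarrow> q)" for x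
  have qsQ: "qs \<psi> \<in> Q" for \<psi> unfolding qs_def Q_def using E1 by auto
  have QcQ: "Qc x \<in> Q" for x
  proof (cases "\<beta> x")
    case None then show ?thesis using Q0 unfolding Qc_def by simp
  next
    case (Some y) then have "y \<in> fst ` M" using E3[of x] by auto
    then show ?thesis using Some unfolding Qc_def Q_def by simp
  qed
  have cu: "consumer_util f p x (\<beta> x) = f (Qc x) x - p (Qc x)" for x
    unfolding consumer_util_def Qc_def by (cases "\<beta> x") (auto simp: f_zero E5)
  have B3: "f y x - p y \<le> f (Qc x) x - p (Qc x)" if yQ: "y \<in> Q" for x y
  proof -
    obtain m where "m \<in> M" "y = fst m" using yQ unfolding Q_def by blast
    then show ?thesis using E4[of m x] cu[of x] by simp
  qed
  have Qc_mono: "Qc x1 \<le> Qc x2" if "x1 \<le> x2" for x1 x2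
  proof (rule ccontr)
    assume c: "\<not> Qc x1 \<le> Qc x2"
    then have "x1 \<noteq> x2" by auto
    with that have lt: "x1 < x2" by simp
    have "f (Qc x1) x2 - f (Qc x2) x2 > f (Qc x1) x1 - f (Qc x2) x1"
      using f_sc lt c Q01[OF QcQ[of x1]] Q01[OF QcQ[of x2]] unfolding strict_single_crossing_def by auto
    moreover have "f (Qc x2) x1 - p (Qc x2) \<le> f (Qc x1) x1 - p (Qc x1)" using B3[OF QcQ[of x2], of x1] .
    moreover have "f (Qc x1) x2 - p (Qc x1) \<le> f (Qc x2) x2 - p (Qc x2)" using B3[OF QcQ[of x1], of x2] .
    ultimately show False by linarith
  qed
  have qs_mono: "qs x1 \<le> qs x2" if "x1 \<le> x2" for x1 x2
  proof (rule ccontr)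
    assume c: "\<not> qs x1 \<le> qs x2"
    then have "x1 \<noteq> x2" by auto
    with that have lt: "x1 < x2" by simp
    have "- g (qs x1) x2 + g (qs x2) x2 > - g (qs x1) x1 + g (qs x2) x1"
      using g_sc lt c Q01[OF qsQ[of x1]] Q01[OF qsQ[of x2]] unfolding strict_single_crossing_def by auto
    moreover have "p (qs x2) - g (qs x2) x1 - snd (\<sigma> x2) \<le> p (qs x1) - g (qs x1) x1 - snd (\<sigma> x1)"
      using E2[OF E1[of x2], of x1] unfolding qs_def .
    moreover have "p (qs x1) - g (qs x1) x2 - snd (\<sigma> x1) \<le> p (qs x2) - g (qs x2) x2 - snd (\<sigma> x2)"
      using E2[OF E1[of x1], of x2] unfolding qs_def .
    ultimately show False by linarith
  qed
  have Qc_pos: "Qc x = y \<longleftrightarrow> \<beta> x = Some y" if "0 < y" for x y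
    using that unfolding Qc_def by (cases "\<beta> x") auto
  have qs_sets: "{\<psi>. qs \<psi> = y} \<in> sets G" for y
    unfolding qs_def by (rule fin_pre[OF finM E1 E6 SG(2)])
  have B6: "measure G {\<psi>. x \<le> qs \<psi>} = measure F {z. x \<le> Qc z}" if x: "x \<in> Q" "0 < x" for x
  proof -
    define S where "S = {y\<in>Q. x \<le> y}"
    have finS: "finite S" unfolding S_def using finQ by simp
    have e1: "{\<psi>. x \<le> qs \<psi>} = (\<Union>y\<in>S. {\<psi>. qs \<psi> = y})" unfolding S_def using qsQ by auto
    have "measure G (\<Union>y\<in>S. {\<psi>. qs \<psi> = y}) = (\<Sum>y\<in>S. measure G {\<psi>. qs \<psi> = y})"
      by (rule G.finite_measure_finite_Union) (use finS qs_sets in \<open>auto simp: disjoint_family_on_def\<close>)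
    then have "measure G {\<psi>. x \<le> qs \<psi>} = (\<Sum>y\<in>S. measure G {\<psi>. qs \<psi> = y})"
      using e1 by simp
    also have "\<dots> = (\<Sum>y\<in>S. measure F {z. \<beta> z = Some y})"
      by (intro sum.cong refl) (use E8 x in \<open>auto simp: S_def Q_def qs_def\<close>)
    also have "\<dots> = measure F (\<Union>y\<in>S. {z. \<beta> z = Some y})"
      by (rule F.finite_measure_finite_Union[symmetric]) (use finS E7 in \<open>auto simp: disjoint_family_on_def\<close>)
    also have "(\<Union>y\<in>S. {z. \<beta> z = Some y}) = {z. x \<le> Qc z}"
    proof safe
      fix z y assume "y \<in> S" "\<beta> z = Some y"
      then show "x \<le> Qc z" unfolding S_def Qc_def by auto
    next
      fix z assume z: "x \<le> Qc z"
      then have "0 < Qc z" using x by simp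
      then have "\<beta> z = Some (Qc z)" using Qc_pos by blast
      then show "z \<in> (\<Union>y\<in>S. {z. \<beta> z = Some y})" using z QcQ[of z] unfolding S_def by auto
    qed
    finally show ?thesis .
  qed
  have B7: "AE \<psi> in G. \<forall>x\<in>{x\<in>Q. 0 < x}. (\<psi> \<in> {\<psi>. x \<le> qs \<psi>} \<longleftrightarrow> \<phi> \<psi> \<in> {z. x \<le> Qc z})"
  proof (rule AE_finite_allI)
    show "finite {x\<in>Q. 0 < x}" using finQ by simp
  next
    fix x assume x: "x \<in> {x\<in>Q. 0 < x}"
    show "AE \<psi> in G. (\<psi> \<in> {\<psi>. x \<le> qs \<psi>} \<longleftrightarrow> \<phi> \<psi> \<in> {z. x \<le> Qc z})"
    proof (rule match_AE[OF F G qt])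
      show "measure G {\<psi>. x \<le> qs \<psi>} = measure F {z. x \<le> Qc z}" using B6 x by auto
    qed (use qs_mono Qc_mono in \<open>auto intro: order_trans\<close>)
  qed
  have B8: "AE \<psi> in G. qs \<psi> = Qc (\<phi> \<psi>)"
    using B7
  proof (rule AE_mp, intro AE_I2 impI)
    fix \<psi> assume h: "\<forall>x\<in>{x\<in>Q. 0 < x}. (\<psi> \<in> {\<psi>. x \<le> qs \<psi>} \<longleftrightarrow> \<phi> \<psi> \<in> {z. x \<le> Qc z})"
    show "qs \<psi> = Qc (\<phi> \<psi>)"
    proof (rule ccontr)
      assume "qs \<psi> \<noteq> Qc (\<phi> \<psi>)"
      then consider "qs \<psi> < Qc (\<phi> \<psi>)" | "Qc (\<phi> \<psi>) < qs \<psi>" by linarith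
      then show False
      proof cases
        case 1
        then have "0 < Qc (\<phi> \<psi>)" using Q01[OF qsQ[of \<psi>]] by linarith
        then show False using h[rule_format, of "Qc (\<phi> \<psi>)"] QcQ 1 by auto
      next
        case 2
        then have "0 < qs \<psi>" using Q01[OF QcQ[of "\<phi> \<psi>"]] by linarith
        then show False using h[rule_format, of "qs \<psi>"] qsQ 2 by auto
      qed
    qed
  qed
  show ?thesis
    using B8
  proof (rule AE_mp, intro AE_I2 impI)
    fix \<psi> assume h: "qs \<psi> = Qc (\<phi> \<psi>)"
    show "buyer_best (\<lambda>q \<psi>. f q (\<phi> \<psi>) - g q \<psi>) M \<psi> (\<sigma> \<psi>)"
      unfolding buyer_best_def
    proof (intro conjI ballI E1)
      fix m assume m: "m \<in> M"
      have "f (fst m) (\<phi> \<psi>) - p (fst m) \<le> f (qs \<psi>) (\<phi> \<psi>) - p (qs \<psi>)"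
        using B3[of "fst m" "\<phi> \<psi>"] m h unfolding Q_def by auto
      moreover have "p (fst m) - g (fst m) \<psi> - snd m \<le> p (qs \<psi>) - g (qs \<psi>) \<psi> - snd (\<sigma> \<psi>)"
        using E2[OF m, of \<psi>] unfolding qs_def .
      ultimately show "f (fst m) (\<phi> \<psi>) - g (fst m) \<psi> - snd m \<le> f (fst (\<sigma> \<psi>)) (\<phi> \<psi>) - g (fst (\<sigma> \<psi>)) \<psi> - snd (\<sigma> \<psi>)"
        unfolding qs_def by linarith
    qed
  qed
qed

theorem proposition1:
  fixes F G :: "real measure" and f g :: "real \<Rightarrow> real \<Rightarrow> real"
    and \<phi> :: "real \<Rightarrow> real" and c :: real
  assumes F: "type_distribution F" and G: "type_distribution G"
    and f_concave: "\<And>\<phi>'. concave_on {0..1} (\<lambda>q. f q \<phi>')"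
    and f_mono: "\<And>\<phi>'. mono_on {0..1} (\<lambda>q. f q \<phi>')"
    and f_zero: "\<And>\<phi>'. f 0 \<phi>' = 0"
    and f_bounds: "\<And>q \<phi>'. q \<in> {0..1} \<Longrightarrow> 0 \<le> f q \<phi>' \<and> f q \<phi>' \<le> 1"
    and f_sc: "strict_single_crossing f"
    and g_convex: "\<And>\<psi>. convex_on {0..1} (\<lambda>q. g q \<psi>)"
    and g_mono: "\<And>\<psi>. mono_on {0..1} (\<lambda>q. g q \<psi>)"
    and g_zero: "\<And>\<psi>. g 0 \<psi> = 0"
    and g_sc: "strict_single_crossing (\<lambda>q \<psi>. - g q \<psi>)"
    and c_nonneg: "0 \<le> c"
    and \<phi>_quantile: "\<And>\<psi>. cdf F (\<phi> \<psi>) = cdf G \<psi>"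
    and \<phi>_mono: "mono \<phi>"
  defines "v \<equiv> (\<lambda>q \<psi>. f q (\<phi> \<psi>) - g q \<psi>)"
  shows "(\<forall>\<psi>. concave_on {0..1} (\<lambda>q. v q \<psi>))
       \<and> (\<forall>\<psi>. v 0 \<psi> = 0)
       \<and> strict_single_crossing v
       \<and> (\<forall>M \<sigma> \<beta> p. menu M \<longrightarrow> cert_equilibrium F G f g M \<sigma> \<beta> p \<longrightarrow>
            (AE \<psi> in G. buyer_best v M \<psi> (\<sigma> \<psi>))
          \<and> (\<exists>s. (\<forall>\<psi>. buyer_best v M \<psi> (s \<psi>))
                \<and> (\<forall>m\<in>M. {\<psi>. s \<psi> = m} \<in> sets G)
                \<and> (AE \<psi> in G. s \<psi> = \<sigma> \<psi>)
                \<and> certifier_revenue G c \<sigma> = seller_revenue G c s))"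
proof -
  have SG: "sets G = sets borel" "space G = UNIV" using td_facts[OF G] by auto
  interpret G: prob_space G using td_facts[OF G] by simp
  have conc: "concave_on {0..1} (\<lambda>q. v q \<psi>)" for \<psi>
  proof -
    have "convex_on {0..1} (\<lambda>q. - f q (\<phi> \<psi>) + g q \<psi>)"
      using f_concave[of "\<phi> \<psi>", unfolded concave_on_def] g_convex[of \<psi>] by (rule convex_on_add)
    then show ?thesis unfolding concave_on_def v_def by simp
  qed
  have sc: "strict_single_crossing v"
    unfolding strict_single_crossing_def
  proof (intro allI impI)
    fix \<theta>1 \<theta>2 q1 q2 :: real
    assume h: "\<theta>1 < \<theta>2" "0 \<le> q1" "q1 < q2" "q2 \<le> 1"
    have gg: "- g q2 \<theta>2 - - g q1 \<theta>2 > - g q2 \<theta>1 - - g q1 \<theta>1"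
      using g_sc h unfolding strict_single_crossing_def by blast
    have "\<phi> \<theta>1 \<le> \<phi> \<theta>2" using \<phi>_mono h(1) by (simp add: monoD)
    then consider "\<phi> \<theta>1 < \<phi> \<theta>2" | "\<phi> \<theta>1 = \<phi> \<theta>2" by linarith
    then have ff: "f q2 (\<phi> \<theta>2) - f q1 (\<phi> \<theta>2) \<ge> f q2 (\<phi> \<theta>1) - f q1 (\<phi> \<theta>1)"
    proof cases
      case 1
      have "f q2 (\<phi> \<theta>2) - f q1 (\<phi> \<theta>2) > f q2 (\<phi> \<theta>1) - f q1 (\<phi> \<theta>1)"
        using f_sc 1 h(2-4) unfolding strict_single_crossing_def by blast
      then show ?thesis by simp
    qed simp
    show "v q2 \<theta>2 - v q1 \<theta>2 > v q2 \<theta>1 - v q1 \<theta>1"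
      unfolding v_def using gg ff by linarith
  qed
  have main: "(AE \<psi> in G. buyer_best v M \<psi> (\<sigma> \<psi>))
          \<and> (\<exists>s. (\<forall>\<psi>. buyer_best v M \<psi> (s \<psi>))
                \<and> (\<forall>m\<in>M. {\<psi>. s \<psi> = m} \<in> sets G)
                \<and> (AE \<psi> in G. s \<psi> = \<sigma> \<psi>)
                \<and> certifier_revenue G c \<sigma> = seller_revenue G c s)"
    if M: "menu M" and eq: "cert_equilibrium F G f g M \<sigma> \<beta> p" for M \<sigma> \<beta> p
  proof -
    have AEb: "AE \<psi> in G. buyer_best v M \<psi> (\<sigma> \<psi>)"
      unfolding v_def by (rule eq_AE[OF F G f_zero f_sc g_sc \<phi>_quantile M eq])
    obtain N where N: "{x \<in> space G. \<not> buyer_best v M x (\<sigma> x)} \<subseteq> N" "emeasure G N = 0" "N \<in> sets G"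
      using AEb by (rule AE_E)
    have finM: "finite M" and M0: "(0,0) \<in> M" and M01: "\<And>m. m \<in> M \<Longrightarrow> 0 \<le> fst m \<and> fst m \<le> 1"
      using M unfolding menu_def by auto
    have Mne: "M \<noteq> {}" using M0 by auto
    have E1: "\<And>\<psi>. \<sigma> \<psi> \<in> M" and E6: "\<And>m. m \<in> M \<Longrightarrow> {\<psi>. \<sigma> \<psi> = m} \<in> sets G"
      using eq unfolding cert_equilibrium_def by blast+
    have ex_best: "\<exists>m. buyer_best v M \<psi> m" for \<psi>
    proof -
      define U where "U m = v (fst m) \<psi> - snd m" for m
      have "Max (U ` M) \<in> U ` M" using finM Mne by simp
      then obtain m where m: "m \<in> M" "U m = Max (U ` M)" by auto
      have "\<forall>m'\<in>M. U m' \<le> U m" using m finM by simp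
      then show ?thesis using m unfolding buyer_best_def U_def by blast
    qed
    define s0 where "s0 \<psi> = (SOME m. buyer_best v M \<psi> m)" for \<psi>
    have s0_best: "buyer_best v M \<psi> (s0 \<psi>)" for \<psi>
      unfolding s0_def using ex_best[of \<psi>] by (rule someI_ex)
    define s where "s \<psi> = (if \<psi> \<in> N then s0 \<psi> else \<sigma> \<psi>)" for \<psi>
    have s_best: "buyer_best v M \<psi> (s \<psi>)" for \<psi>
      using s0_best[of \<psi>] N(1) SG(2) unfolding s_def by auto
    have s_in: "s \<psi> \<in> M" for \<psi> using s_best[of \<psi>] unfolding buyer_best_def by simp
    define B where "B \<psi> = {m\<in>M. buyer_best v M \<psi> m}" for \<psi>
    have s0B: "s0 \<psi> = (SOME m. m \<in> B \<psi>)" for \<psi>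
    proof -
      have "(\<lambda>m. buyer_best v M \<psi> m) = (\<lambda>m. m \<in> B \<psi>)"
        unfolding B_def buyer_best_def by auto
      then show ?thesis unfolding s0_def by simp
    qed
    have Bm: "{\<psi>. buyer_best v M \<psi> m} \<in> sets G" if "m \<in> M" for m
      using best_interval[OF sc M that] SG by simp
    have BS: "{\<psi>. B \<psi> = S} \<in> sets G" if "S \<in> Pow M" for S
    proof -
      have "{\<psi>. B \<psi> = S} = (\<Inter>m\<in>M. if m \<in> S then {\<psi>. buyer_best v M \<psi> m} else UNIV - {\<psi>. buyer_best v M \<psi> m})"
        using that unfolding B_def by (auto split: if_splits)
      also have "\<dots> \<in> sets G"
        using finM Mne Bm SG by (intro sets.finite_INT) auto
      finally show ?thesis .
    qed
    have s0_sets: "{\<psi>. s0 \<psi> = m} \<in> sets G" for m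
    proof -
      have "{\<psi>. (SOME x. x \<in> B \<psi>) = m} \<in> sets G"
        by (rule fin_pre[of "Pow M" B G, OF _ _ BS SG(2)]) (use finM in \<open>auto simp: B_def\<close>)
      then show ?thesis using s0B by simp
    qed
    have s_sets: "{\<psi>. s \<psi> = m} \<in> sets G" if "m \<in> M" for m
    proof -
      have "{\<psi>. s \<psi> = m} = (N \<inter> {\<psi>. s0 \<psi> = m}) \<union> ({\<psi>. \<sigma> \<psi> = m} - N)"
        unfolding s_def by auto
      then show ?thesis using N(3) s0_sets E6[OF that] by auto
    qed
    have Nnull: "N \<in> null_sets G" using N by auto
    have AEs: "AE \<psi> in G. s \<psi> = \<sigma> \<psi>"
      by (rule AE_I'[OF Nnull]) (auto simp: s_def)
    have int_eq: "(\<integral>\<psi>. snd (\<sigma> \<psi>) \<partial>G) = (\<integral>\<psi>. snd (s \<psi>) \<partial>G)"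
    proof (rule integral_cong_AE)
      show "(\<lambda>\<psi>. snd (\<sigma> \<psi>)) \<in> borel_measurable G" by (rule fin_meas[OF finM E1 E6 SG(2)])
      show "(\<lambda>\<psi>. snd (s \<psi>)) \<in> borel_measurable G" by (rule fin_meas[OF finM s_in s_sets SG(2)])
      show "AE x in G. snd (\<sigma> x) = snd (s x)" using AEs by eventually_elim simp
    qed
    have meas_eq: "measure G {\<psi>. 0 < fst (\<sigma> \<psi>)} = measure G {\<psi>. fst (s \<psi>) \<noteq> 0}"
    proof (rule measure_eq_AE)
      show "AE x in G. (x \<in> {\<psi>. 0 < fst (\<sigma> \<psi>)}) = (x \<in> {\<psi>. fst (s \<psi>) \<noteq> 0})"
        using AEs
      proof eventually_elim
        case (elim x)
        then show ?case using M01[OF E1[of x]] by auto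
      qed
      show "{\<psi>. 0 < fst (\<sigma> \<psi>)} \<in> sets G" by (rule fin_pre[OF finM E1 E6 SG(2)])
      show "{\<psi>. fst (s \<psi>) \<noteq> 0} \<in> sets G" by (rule fin_pre[OF finM s_in s_sets SG(2)])
    qed
    have "certifier_revenue G c \<sigma> = seller_revenue G c s"
      unfolding certifier_revenue_def seller_revenue_def using int_eq meas_eq by simp
    then show ?thesis
      using AEb s_best s_sets AEs by blast
  qed
  have v0: "\<forall>\<psi>. v 0 \<psi> = 0" unfolding v_def by (simp add: f_zero g_zero)
  show ?thesis
    using conc sc v0 main by blast
qed

end
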